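(* Let $m,n$ be positive integers, let $(W_1,\dots,W_n)$ have the multinomial distribution with parameters $m$ and $(\frac1n,\dots,\frac1n)$, let $\gamma>0$ and put $k_m=\lfloor\gamma\log m\rfloor$. Then there exists a constant $c_\gamma>0$ such that $$\max_{k\le k_m}\ \max_{\substack{s_1,\dots,s_n\in\mathbb{N}_0\\ \sum_{j=1}^ns_j=k}}\Big(\frac nm\Big)^{\sum_{j=1}^n\mathbb{1}\{s_j\ge1\}}\mathbb{E}\big[W_1^{s_1}\cdots W_n^{s_n}\big]\le\Big(1+c_\gamma\frac{m^{1+\gamma}}{n}\Big)^{k_m}.$$ *)

theory Defs
  imports Complex_Main
begin

definition multinomial_support :: "nat \<Rightarrow> nat \<Rightarrow> (nat \<Rightarrow> nat) set" where
  "multinomial_support m n = {w. (\<forall>j\<ge>n. w j = 0) \<and> (\<Sum>j<n. w j) = m}"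

definition multinomial_pmf :: "nat \<Rightarrow> nat \<Rightarrow> (nat \<Rightarrow> nat) \<Rightarrow> real" where
  "multinomial_pmf m n w = fact m / (\<Prod>j<n. fact (w j)) * (1 / real n) ^ m"

text \<open>Mixed moment E[W_1^{s_1} ... W_n^{s_n}] for (W_1,...,W_n) ~ Multinomial(m; 1/n,...,1/n)
  (indices shifted to 0..n-1).\<close>
definition multinomial_moment :: "nat \<Rightarrow> nat \<Rightarrow> (nat \<Rightarrow> nat) \<Rightarrow> real" where
  "multinomial_moment m n s =
     (\<Sum>w\<in>multinomial_support m n. multinomial_pmf m n w * (\<Prod>j<n. real (w j) ^ s j))"

end

theory Submission imports Defs "HOL-Combinatorics.Stirling" "HOL-Library.FuncSet"
begin

definition ff :: "real \<Rightarrow> nat \<Rightarrow> real" where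
  "ff x t = (\<Prod>i<t. x - real i)"

lemma ff_0[simp]: "ff x 0 = 1" by (simp add: ff_def)
lemma ff_Suc: "ff x (Suc t) = ff x t * (x - real t)" by (simp add: ff_def)

lemma ff_zero: "w < t \<Longrightarrow> ff (real w) t = 0"
  unfolding ff_def by (rule prod_zero) auto

lemma ff_fact: "ff (real a + real t) t * fact a = fact (a + t)"
proof (induction t arbitrary: a)
  case 0 then show ?case by simp
next
  case (Suc t)
  have "ff (real a + real (Suc t)) (Suc t) = ff (real (Suc a) + real t) t * (real a + 1)"
    unfolding ff_def by (simp add: prod.lessThan_Suc algebra_simps)
  then have "ff (real a + real (Suc t)) (Suc t) * fact a = ff (real (Suc a) + real t) t * ((real a + 1) * fact a)"
    by (simp only: mult.assoc)
  also have "(real a + 1) * fact a = (fact (Suc a) :: real)" by (simp add: fact_Suc)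
  also have "ff (real (Suc a) + real t) t * fact (Suc a) = fact (Suc a + t)" by (rule Suc.IH)
  finally show ?case by simp
qed

lemma ff_le_pow: "ff (real m) t \<le> real m ^ t"
  unfolding ff_def
proof -
  have "(\<Prod>i<t. real m - real i) \<le> (\<Prod>i<t. real m)"
  proof (cases "t \<le> m")
    case True
    then show ?thesis by (intro prod_mono) auto
  next
    case False
    then have e: "(\<Prod>i<t. real m - real i) = 0" by (intro prod_zero) (auto intro!: bexI[of _ m])
    have "0 \<le> (\<Prod>i<t. real m)" by simp
    then show ?thesis using e by linarith
  qed
  then show "(\<Prod>i<t. real m - real i) \<le> real m ^ t" by simp
qed

lemma stirling_expand: "x ^ s = (\<Sum>t\<le>s. real (Stirling s t) * ff x t)"
proof (induction s)
  case 0 then show ?case by simp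
next
  case (Suc s)
  define g where "g t = real t * real (Stirling s t) * ff x t" for t
  have xf: "x * ff x t = ff x (Suc t) + real t * ff x t" for t
    by (simp add: ff_Suc algebra_simps)
  have "x ^ Suc s = (\<Sum>t\<le>s. real (Stirling s t) * (x * ff x t))"
    using Suc.IH by (simp add: sum_distrib_left algebra_simps)
  also have "\<dots> = (\<Sum>t\<le>s. real (Stirling s t) * ff x (Suc t)) + (\<Sum>t\<le>s. g t)"
    by (simp add: xf g_def algebra_simps sum.distrib)
  also have "(\<Sum>t\<le>s. g t) = (\<Sum>u\<le>s. g (Suc u))"
  proof -
    have "(\<Sum>t\<le>Suc s. g t) = g 0 + (\<Sum>u\<le>s. g (Suc u))" by (rule sum.atMost_Suc_shift)
    moreover have "(\<Sum>t\<le>Suc s. g t) = (\<Sum>t\<le>s. g t) + g (Suc s)" by simp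
    moreover have "g 0 = 0" "g (Suc s) = 0" by (simp_all add: g_def)
    ultimately show ?thesis by simp
  qed
  also have "(\<Sum>t\<le>Suc s. real (Stirling (Suc s) t) * ff x t)
     = real (Stirling (Suc s) 0) * ff x 0 + (\<Sum>u\<le>s. real (Stirling (Suc s) (Suc u)) * ff x (Suc u))"
    by (rule sum.atMost_Suc_shift)
  moreover have "\<dots> = (\<Sum>t\<le>s. real (Stirling s t) * ff x (Suc t)) + (\<Sum>u\<le>s. g (Suc u))"
    by (simp add: g_def sum.distrib algebra_simps)
  ultimately show ?case by simp
qed

lemma stirling_bound: "Stirling (Suc s) (Suc u) \<le> (s choose u) * (Suc u) ^ s"
proof (induction s arbitrary: u)
  case 0 then show ?case by (cases u) auto
next
  case (Suc s)
  show ?case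
  proof (cases u)
    case 0
    have "Stirling (Suc (Suc s)) (Suc 0) = 1" by (rule Stirling_1)
    then show ?thesis using 0 by simp
  next
    case (Suc v)
    have "Stirling (Suc (Suc s)) (Suc u) = Suc u * Stirling (Suc s) (Suc u) + Stirling (Suc s) u" by simp
    also have "\<dots> \<le> Suc u * ((s choose u) * (Suc u) ^ s) + (s choose v) * (Suc v) ^ s"
    proof -
      have h1: "Stirling (Suc s) (Suc u) \<le> (s choose u) * (Suc u) ^ s" by (rule Suc.IH)
      have h2: "Stirling (Suc s) (Suc v) \<le> (s choose v) * (Suc v) ^ s" by (rule Suc.IH)
      then have h2': "Stirling (Suc s) u \<le> (s choose v) * (Suc v) ^ s" using \<open>u = Suc v\<close> by (simp only:)
      show ?thesis by (rule add_mono[OF mult_le_mono2[OF h1] h2'])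
    qed
    also have "(Suc v) ^ s \<le> (Suc u) ^ Suc s"
    proof -
      have "(Suc v) ^ s \<le> (Suc u) ^ s" using \<open>u = Suc v\<close> by (intro power_mono) auto
      also have "\<dots> \<le> (Suc u) ^ Suc s" by (intro power_increasing) auto
      finally show ?thesis .
    qed
    then have X: "(s choose v) * (Suc v) ^ s \<le> (s choose v) * (Suc u) ^ Suc s" by (rule mult_le_mono2)
    have eq: "Suc u * ((s choose u) * (Suc u) ^ s) = (s choose u) * (Suc u) ^ Suc s"
      by (simp only: power_Suc mult.left_commute)
    have "Suc u * ((s choose u) * (Suc u) ^ s) + (s choose v) * (Suc v) ^ s
       \<le> (s choose u) * (Suc u) ^ Suc s + (s choose v) * (Suc u) ^ Suc s"
      by (rule add_mono[OF eq_imp_le[OF eq] X])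
    also have "\<dots> = (Suc s choose u) * (Suc u) ^ Suc s" using \<open>u = Suc v\<close> by (simp add: algebra_simps)
    finally show ?thesis .
  qed
qed


lemma supp_le: "w \<in> multinomial_support m n \<Longrightarrow> w j \<le> m"
  unfolding multinomial_support_def
proof (cases "j < n")
  case True
  assume "w \<in> {w. (\<forall>j\<ge>n. w j = 0) \<and> (\<Sum>j<n. w j) = m}"
  then have "(\<Sum>j<n. w j) = m" by simp
  moreover have "w j \<le> (\<Sum>j<n. w j)" using True by (intro member_le_sum) auto
  ultimately show ?thesis by simp
next
  case False
  assume "w \<in> {w. (\<forall>j\<ge>n. w j = 0) \<and> (\<Sum>j<n. w j) = m}"
  then show ?thesis using False by simp
qed

lemma finite_supp: "finite (multinomial_support m n)"
proof -
  have "multinomial_support m n \<subseteq> {f. \<forall>x. (x \<in> {..<n} \<longrightarrow> f x \<in> {..m}) \<and> (x \<notin> {..<n} \<longrightarrow> f x = 0)}"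
    using supp_le by (auto simp: multinomial_support_def)
  moreover have "finite {f. \<forall>x. (x \<in> {..<n} \<longrightarrow> f x \<in> {..m}) \<and> (x \<notin> {..<n} \<longrightarrow> f x = (0::nat))}"
    by (rule finite_set_of_finite_funs) auto
  ultimately show ?thesis by (rule finite_subset)
qed

lemma supp_0: "multinomial_support m 0 = (if m = 0 then {\<lambda>_. 0} else {})"
  by (auto simp: multinomial_support_def)

lemma supp_Suc_split:
  "(\<Sum>w\<in>multinomial_support m (Suc n). F w) =
   (\<Sum>i\<le>m. \<Sum>w\<in>multinomial_support (m - i) n. F (w(n := i)))"
proof -
  let ?A = "Sigma {..m} (\<lambda>i. multinomial_support (m - i) n)"
  have bij: "bij_betw (\<lambda>(i, w). w(n := i)) ?A (multinomial_support m (Suc n))"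
  proof (rule bij_betw_byWitness[where f' = "\<lambda>w. (w n, w(n := 0))"])
    show "\<forall>a\<in>?A. (\<lambda>w. (w n, w(n := 0))) ((\<lambda>(i, w). w(n := i)) a) = a"
      by (auto simp: multinomial_support_def)
    show "\<forall>a'\<in>multinomial_support m (Suc n). (\<lambda>(i, w). w(n := i)) ((\<lambda>w. (w n, w(n := 0))) a') = a'"
      by auto
    show "(\<lambda>(i, w). w(n := i)) ` ?A \<subseteq> multinomial_support m (Suc n)"
    proof (rule image_subsetI)
      fix p assume "p \<in> ?A"
      then obtain i w where p: "p = (i, w)" and i: "i \<le> m" and w: "w \<in> multinomial_support (m - i) n" by auto
      have "(\<Sum>j<n. (w(n := i)) j) = (\<Sum>j<n. w j)" by (intro sum.cong) auto
      then have "w(n := i) \<in> multinomial_support m (Suc n)"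
        using i w by (auto simp: multinomial_support_def)
      then show "(\<lambda>(i, w). w(n := i)) p \<in> multinomial_support m (Suc n)" using p by simp
    qed
    show "(\<lambda>w. (w n, w(n := 0))) ` multinomial_support m (Suc n) \<subseteq> ?A"
    proof (rule image_subsetI)
      fix w assume w: "w \<in> multinomial_support m (Suc n)"
      have s: "(\<Sum>j<n. (w(n := 0)) j) = (\<Sum>j<n. w j)" by (intro sum.cong) auto
      from w have "(\<Sum>j<n. w j) + w n = m" by (simp add: multinomial_support_def)
      then have "w n \<in> {..m}" by simp
      moreover have "w(n := 0) \<in> multinomial_support (m - w n) n"
        using w s \<open>(\<Sum>j<n. w j) + w n = m\<close> by (auto simp: multinomial_support_def)
      ultimately show "(w n, w(n := 0)) \<in> ?A" by simp
    qed
  qed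
  have "(\<Sum>w\<in>multinomial_support m (Suc n). F w) = (\<Sum>p\<in>?A. F ((\<lambda>(i, w). w(n := i)) p))"
    using sum.reindex_bij_betw[OF bij, of F] by simp
  also have "\<dots> = (\<Sum>i\<le>m. \<Sum>w\<in>multinomial_support (m - i) n. F (w(n := i)))"
    using sum.Sigma[of "{..m}" "\<lambda>i. multinomial_support (m - i) n" "\<lambda>i w. F (w(n := i))"]
    by (simp add: finite_supp split_def)
  finally show ?thesis .
qed

lemma mass: "(\<Sum>w\<in>multinomial_support m n. fact m / (\<Prod>j<n. fact (w j)) :: real) = real n ^ m"
proof (induction n arbitrary: m)
  case 0 then show ?case by (simp add: supp_0)
next
  case (Suc n)
  have "(\<Sum>w\<in>multinomial_support m (Suc n). fact m / (\<Prod>j<Suc n. fact (w j)) :: real)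
      = (\<Sum>i\<le>m. \<Sum>w\<in>multinomial_support (m - i) n. fact m / (\<Prod>j<Suc n. fact ((w(n := i)) j)))"
    by (rule supp_Suc_split)
  also have "\<dots> = (\<Sum>i\<le>m. real (m choose i) * (\<Sum>w\<in>multinomial_support (m - i) n. fact (m - i) / (\<Prod>j<n. fact (w j))))"
  proof (intro sum.cong refl)
    fix i assume i: "i \<in> {..m}"
    show "(\<Sum>w\<in>multinomial_support (m - i) n. fact m / (\<Prod>j<Suc n. fact ((w(n := i)) j)) :: real)
       = real (m choose i) * (\<Sum>w\<in>multinomial_support (m - i) n. fact (m - i) / (\<Prod>j<n. fact (w j)))"
      unfolding sum_distrib_left
    proof (intro sum.cong refl)
      fix w
      have p: "(\<Prod>j<n. fact ((w(n := i)) j) :: real) = (\<Prod>j<n. fact (w j))" by (intro prod.cong) auto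
      have "real (m choose i) = fact m / (fact i * fact (m - i))" using i by (simp add: binomial_fact)
      then show "fact m / (\<Prod>j<Suc n. fact ((w(n := i)) j)) = real (m choose i) * (fact (m - i) / (\<Prod>j<n. fact (w j)) :: real)"
        by (simp add: p field_simps)
    qed
  qed
  also have "\<dots> = (\<Sum>i\<le>m. real (m choose i) * 1 ^ i * real n ^ (m - i))"
    using Suc.IH by simp
  also have "\<dots> = (1 + real n) ^ m" by (rule binomial_ring[symmetric])
  finally show ?case by simp
qed


lemma ff_shift: "ff (real (a + t)) t = fact (a + t) / fact a"
  using ff_fact[of a t] by (simp add: field_simps)

lemma ff_shift': "ff (real a + real t) t = fact (a + t) / fact a"
  using ff_shift[of a t] by simp

lemma fmoment:
  "(\<Sum>w\<in>multinomial_support m n. fact m / (\<Prod>j<n. fact (w j)) * (\<Prod>j<n. ff (real (w j)) (\<tau> j)) :: real)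
    = ff (real m) (\<Sum>j<n. \<tau> j) * real n ^ (m - (\<Sum>j<n. \<tau> j))"
proof -
  define T where "T = (\<Sum>j<n. \<tau> j)"
  show ?thesis
  proof (cases "m < T")
    case True
    have "fact m / (\<Prod>j<n. fact (w j)) * (\<Prod>j<n. ff (real (w j)) (\<tau> j)) = (0::real)"
      if w: "w \<in> multinomial_support m n" for w
    proof -
      have "\<exists>j<n. w j < \<tau> j"
      proof (rule ccontr)
        assume "\<not> ?thesis"
        then have "T \<le> (\<Sum>j<n. w j)" unfolding T_def by (intro sum_mono) auto
        with w True show False by (simp add: multinomial_support_def)
      qed
      then have "(\<Prod>j<n. ff (real (w j)) (\<tau> j)) = 0"
        by (auto intro: prod_zero ff_zero)
      then show ?thesis by simp
    qed
    then have "(\<Sum>w\<in>multinomial_support m n. fact m / (\<Prod>j<n. fact (w j)) * (\<Prod>j<n. ff (real (w j)) (\<tau> j)) :: real) = 0"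
      by (intro sum.neutral) blast
    moreover have "ff (real m) T = 0" using ff_zero[OF True] .
    ultimately show ?thesis unfolding T_def by simp
  next
    case False
    define \<tau>' where "\<tau>' j = (if j < n then \<tau> j else 0)" for j
    define h where "h w' = (\<lambda>j. w' j + \<tau>' j)" for w' :: "nat \<Rightarrow> nat"
    define A where "A = {w\<in>multinomial_support m n. \<forall>j<n. \<tau> j \<le> w j}"
    define F where "F w = (fact m / (\<Prod>j<n. fact (w j)) * (\<Prod>j<n. ff (real (w j)) (\<tau> j)) :: real)" for w
    have T': "(\<Sum>j<n. \<tau>' j) = T" unfolding T_def \<tau>'_def by simp
    have "(\<Sum>w\<in>multinomial_support m n. F w) = (\<Sum>w\<in>A. F w)"
    proof (rule sum.mono_neutral_right)
      show "finite (multinomial_support m n)" by (rule finite_supp)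
      show "A \<subseteq> multinomial_support m n" unfolding A_def by auto
      show "\<forall>w\<in>multinomial_support m n - A. F w = 0"
      proof
        fix w assume "w \<in> multinomial_support m n - A"
        then obtain j where "j < n" "w j < \<tau> j" unfolding A_def by auto
        then have "(\<Prod>j<n. ff (real (w j)) (\<tau> j)) = 0" by (auto intro: prod_zero ff_zero)
        then show "F w = 0" unfolding F_def by simp
      qed
    qed
    also have "A = h ` multinomial_support (m - T) n"
    proof
      show "h ` multinomial_support (m - T) n \<subseteq> A"
      proof (rule image_subsetI)
        fix w' assume w': "w' \<in> multinomial_support (m - T) n"
        have "(\<Sum>j<n. h w' j) = (\<Sum>j<n. w' j) + (\<Sum>j<n. \<tau>' j)" unfolding h_def by (rule sum.distrib)
        also have "\<dots> = m" using w' T' False by (simp add: multinomial_support_def)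
        finally show "h w' \<in> A" using w' unfolding A_def h_def \<tau>'_def by (auto simp: multinomial_support_def)
      qed
      show "A \<subseteq> h ` multinomial_support (m - T) n"
      proof
        fix w assume w: "w \<in> A"
        define w' where "w' j = w j - \<tau>' j" for j
        have le: "\<forall>j\<in>{..<n}. \<tau>' j \<le> w j" using w unfolding A_def \<tau>'_def by auto
        have "(\<Sum>j<n. w' j) = (\<Sum>j<n. w j) - (\<Sum>j<n. \<tau>' j)" unfolding w'_def using le by (intro sum_subtractf_nat) auto
        then have "w' \<in> multinomial_support (m - T) n" using w T'
          unfolding A_def by (auto simp: multinomial_support_def w'_def)
        moreover have "w = h w'" unfolding h_def w'_def using le
          by (auto simp: \<tau>'_def)
        ultimately show "w \<in> h ` multinomial_support (m - T) n" by blast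
      qed
    qed
    also have "(\<Sum>w\<in>h ` multinomial_support (m - T) n. F w) = (\<Sum>w'\<in>multinomial_support (m - T) n. F (h w'))"
    proof (rule sum.reindex[unfolded comp_def])
      show "inj_on h (multinomial_support (m - T) n)"
      proof (rule inj_onI)
        fix x y assume "h x = h y"
        then show "x = y" unfolding h_def by (auto simp: fun_eq_iff dest: fun_cong)
      qed
    qed
    also have "\<dots> = (\<Sum>w'\<in>multinomial_support (m - T) n. (fact m / fact (m - T)) * (fact (m - T) / (\<Prod>j<n. fact (w' j))))"
    proof (intro sum.cong refl)
      fix w' assume w': "w' \<in> multinomial_support (m - T) n"
      have "(\<Prod>j<n. ff (real (h w' j)) (\<tau> j)) = (\<Prod>j<n. fact (h w' j) / fact (w' j) :: real)"
        by (intro prod.cong refl) (simp add: h_def \<tau>'_def ff_shift')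
      also have "\<dots> = (\<Prod>j<n. fact (h w' j)) / (\<Prod>j<n. fact (w' j))" by (rule prod_dividef)
      finally have "F (h w') = fact m / (\<Prod>j<n. fact (w' j))"
        unfolding F_def by (simp add: field_simps)
      then show "F (h w') = (fact m / fact (m - T)) * (fact (m - T) / (\<Prod>j<n. fact (w' j)))"
        by simp
    qed
    also have "\<dots> = (fact m / fact (m - T)) * real n ^ (m - T)"
      by (simp only: sum_distrib_left[symmetric] mass)
    also have "fact m / fact (m - T) = ff (real m) T"
      using ff_shift[of "m - T" T] False by simp
    finally show ?thesis unfolding F_def T_def .
  qed
qed


lemma fm_bound:
  assumes "n \<ge> 1"
  shows "(\<Sum>w\<in>multinomial_support m n. multinomial_pmf m n w * (\<Prod>j<n. ff (real (w j)) (\<tau> j)))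
           \<le> (real m / real n) ^ (\<Sum>j<n. \<tau> j)"
proof -
  define T where "T = (\<Sum>j<n. \<tau> j)"
  have "(\<Sum>w\<in>multinomial_support m n. multinomial_pmf m n w * (\<Prod>j<n. ff (real (w j)) (\<tau> j)))
      = (1 / real n) ^ m * (\<Sum>w\<in>multinomial_support m n. fact m / (\<Prod>j<n. fact (w j)) * (\<Prod>j<n. ff (real (w j)) (\<tau> j)))"
    unfolding multinomial_pmf_def sum_distrib_left by (intro sum.cong refl) (simp add: algebra_simps)
  also have "\<dots> = (1 / real n) ^ m * (ff (real m) T * real n ^ (m - T))"
    unfolding fmoment T_def ..
  also have "\<dots> \<le> (real m / real n) ^ T"
  proof (cases "T \<le> m")
    case True
    have "(1 / real n) ^ m * (ff (real m) T * real n ^ (m - T)) = ff (real m) T / real n ^ T"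
    proof -
      have "real n ^ m = real n ^ T * real n ^ (m - T)" using True by (simp add: power_add[symmetric])
      then show ?thesis using assms by (simp add: field_simps power_one_over)
    qed
    also have "\<dots> \<le> real m ^ T / real n ^ T" using assms by (intro divide_right_mono ff_le_pow) auto
    finally show ?thesis by (simp add: power_divide)
  next
    case False
    then have "ff (real m) T = 0" by (intro ff_zero) simp
    then show ?thesis by simp
  qed
  finally show ?thesis unfolding T_def .
qed

lemma factor_bound:
  fixes x M :: real
  assumes x: "x > 0" and M: "exp (real s) \<le> M" and s: "s \<ge> 1"
  shows "(1 / x) * (\<Sum>t\<le>s. real (Stirling s t) * x ^ t) \<le> (1 + M * x) ^ s"
proof -
  obtain s' where s': "s = Suc s'" using s by (cases s) auto
  have M0: "M \<ge> 0" using M by (meson exp_ge_zero order.trans)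
  have "(\<Sum>t\<le>s. real (Stirling s t) * x ^ t)
      = real (Stirling (Suc s') 0) * x ^ 0 + (\<Sum>u\<le>s'. real (Stirling (Suc s') (Suc u)) * x ^ Suc u)"
    unfolding s' by (rule sum.atMost_Suc_shift)
  also have "\<dots> = x * (\<Sum>u\<le>s'. real (Stirling (Suc s') (Suc u)) * x ^ u)"
    by (simp add: sum_distrib_left algebra_simps)
  finally have "(1 / x) * (\<Sum>t\<le>s. real (Stirling s t) * x ^ t) = (\<Sum>u\<le>s'. real (Stirling (Suc s') (Suc u)) * x ^ u)"
    using x by simp
  also have "\<dots> \<le> (\<Sum>u\<le>s'. real (s' choose u) * (M * x) ^ u * 1 ^ (s' - u))"
  proof (intro sum_mono)
    fix u assume u: "u \<in> {..s'}"
    have "real (Stirling (Suc s') (Suc u)) \<le> real ((s' choose u) * (Suc u) ^ s')"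
      using stirling_bound by (simp only: of_nat_le_iff)
    also have "\<dots> = real (s' choose u) * (1 + real u) ^ s'" by simp
    also have "(1 + real u) ^ s' \<le> exp (real u) ^ s'"
      by (intro power_mono exp_ge_add_one_self) auto
    also have "exp (real u) ^ s' = exp (real s') ^ u"
      by (simp add: exp_of_nat_mult[symmetric] mult.commute)
    also have "\<dots> \<le> M ^ u"
    proof (intro power_mono)
      have "exp (real s') \<le> exp (real s)" using s' by simp
      then show "exp (real s') \<le> M" using M by linarith
    qed simp
    finally have "real (Stirling (Suc s') (Suc u)) \<le> real (s' choose u) * M ^ u"
      by (simp add: mult_left_mono)
    then have "real (Stirling (Suc s') (Suc u)) * x ^ u \<le> real (s' choose u) * M ^ u * x ^ u"
      using x by (intro mult_right_mono) auto
    then show "real (Stirling (Suc s') (Suc u)) * x ^ u \<le> real (s' choose u) * (M * x) ^ u * 1 ^ (s' - u)"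
      by (simp add: power_mult_distrib mult.assoc)
  qed
  also have "\<dots> = (M * x + 1) ^ s'" by (rule binomial_ring[symmetric])
  also have "\<dots> \<le> (1 + M * x) ^ s"
  proof -
    have "1 \<le> 1 + M * x" using M0 x by simp
    then have "(1 + M * x) ^ s' \<le> (1 + M * x) ^ s" unfolding s' by (intro power_increasing) auto
    then show ?thesis by (simp add: add.commute)
  qed
  finally show ?thesis .
qed


lemma moment_bound:
  assumes n: "n \<ge> 1" and m: "m \<ge> 1"
  shows "multinomial_moment m n s \<le> (\<Prod>j<n. \<Sum>t\<le>s j. real (Stirling (s j) t) * (real m / real n) ^ t)"
proof -
  define x where "x = real m / real n"
  define P where "P = PiE {..<n} (\<lambda>j. {..s j})"
  define E where "E \<tau> = (\<Sum>w\<in>multinomial_support m n. multinomial_pmf m n w * (\<Prod>j<n. ff (real (w j)) (\<tau> j)))" for \<tau>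
  have finP: "finite P" unfolding P_def by (intro finite_PiE) auto
  have x0: "x \<ge> 0" unfolding x_def by simp
  have "multinomial_moment m n s = (\<Sum>w\<in>multinomial_support m n. multinomial_pmf m n w *
          (\<Sum>\<tau>\<in>P. \<Prod>j<n. real (Stirling (s j) (\<tau> j)) * ff (real (w j)) (\<tau> j)))"
    unfolding multinomial_moment_def P_def
  proof (intro sum.cong refl arg_cong2[where f = "(*)"])
    fix w
    show "(\<Prod>j<n. real (w j) ^ s j) = (\<Sum>\<tau>\<in>PiE {..<n} (\<lambda>j. {..s j}). \<Prod>j<n. real (Stirling (s j) (\<tau> j)) * ff (real (w j)) (\<tau> j))"
      by (subst stirling_expand) (rule prod_sum_PiE, auto)
  qed
  also have "\<dots> = (\<Sum>\<tau>\<in>P. (\<Prod>j<n. real (Stirling (s j) (\<tau> j))) * E \<tau>)"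
    unfolding E_def sum_distrib_left prod.distrib
    by (subst sum.swap) (intro sum.cong refl, simp add: algebra_simps)
  also have "\<dots> \<le> (\<Sum>\<tau>\<in>P. (\<Prod>j<n. real (Stirling (s j) (\<tau> j))) * x ^ (\<Sum>j<n. \<tau> j))"
    unfolding E_def x_def using n by (intro sum_mono mult_left_mono fm_bound prod_nonneg) auto
  also have "\<dots> = (\<Sum>\<tau>\<in>P. \<Prod>j<n. real (Stirling (s j) (\<tau> j)) * x ^ \<tau> j)"
    by (simp add: power_sum prod.distrib)
  also have "\<dots> = (\<Prod>j<n. \<Sum>t\<le>s j. real (Stirling (s j) t) * x ^ t)"
    unfolding P_def by (rule prod_sum_PiE[symmetric]) auto
  finally show ?thesis unfolding x_def .
qed

theorem lemma4p4:
  fixes \<gamma> :: real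
  assumes "\<gamma> > 0"
  shows "\<exists>c>0. \<forall>m n :: nat. m \<ge> 1 \<longrightarrow> n \<ge> 1 \<longrightarrow>
           (\<forall>k \<le> nat \<lfloor>\<gamma> * ln (real m)\<rfloor>. \<forall>s :: nat \<Rightarrow> nat.
              (\<forall>j\<ge>n. s j = 0) \<longrightarrow> (\<Sum>j<n. s j) = k \<longrightarrow>
              (real n / real m) ^ card {j. j < n \<and> s j \<ge> 1} * multinomial_moment m n s
                \<le> (1 + c * real m powr (1 + \<gamma>) / real n) ^ nat \<lfloor>\<gamma> * ln (real m)\<rfloor>)"
proof (intro exI[of _ 1] conjI allI impI)
  fix m n k :: nat and s :: "nat \<Rightarrow> nat"
  assume m: "m \<ge> 1" and n: "n \<ge> 1" and k: "k \<le> nat \<lfloor>\<gamma> * ln (real m)\<rfloor>"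
    and sz: "\<forall>j\<ge>n. s j = 0" and sk: "(\<Sum>j<n. s j) = k"
  define K where "K = nat \<lfloor>\<gamma> * ln (real m)\<rfloor>"
  define x where "x = real m / real n"
  define M where "M = real m powr \<gamma>"
  define y where "y = M * x"
  define G where "G j = (\<Sum>t\<le>s j. real (Stirling (s j) t) * x ^ t)" for j
  have x0: "x > 0" unfolding x_def using m n by simp
  have lnm: "ln (real m) \<ge> 0" using m by simp
  have KK: "real K \<le> \<gamma> * ln (real m)" unfolding K_def using assms lnm by simp
  have Mexp: "M = exp (\<gamma> * ln (real m))" unfolding M_def powr_def using m by simp
  have y: "1 * real m powr (1 + \<gamma>) / real n = y"
    unfolding y_def M_def x_def using m by (simp add: powr_add)
  have y0: "y \<ge> 0" unfolding y_def M_def using x0 by simp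
  have sj: "s j \<le> k" if "j < n" for j
    using sk that by (metis finite_lessThan lessThan_iff member_le_sum zero_le)
  have Gb: "(if 1 \<le> s j then 1 / x else 1) * G j \<le> (1 + y) ^ s j" if j: "j < n" for j
  proof (cases "1 \<le> s j")
    case True
    have "exp (real (s j)) \<le> M"
    proof -
      have "real (s j) \<le> \<gamma> * ln (real m)" using sj[OF j] k KK unfolding K_def by linarith
      then show ?thesis unfolding Mexp by simp
    qed
    then show ?thesis using factor_bound[OF x0 _ True] True unfolding G_def y_def by simp
  next
    case False
    then have "s j = 0" by simp
    then show ?thesis unfolding G_def by simp
  qed
  have G0: "G j \<ge> 0" for j unfolding G_def using x0 by (intro sum_nonneg) auto
  have card: "(real n / real m) ^ card {j. j < n \<and> s j \<ge> 1} = (\<Prod>j<n. if 1 \<le> s j then 1 / x else 1)"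
  proof -
    have "{j. j < n \<and> s j \<ge> 1} = {j\<in>{..<n}. 1 \<le> s j}" by auto
    then have "(real n / real m) ^ card {j. j < n \<and> s j \<ge> 1} = (\<Prod>j\<in>{j\<in>{..<n}. 1 \<le> s j}. 1 / x)"
      unfolding x_def by simp
    also have "\<dots> = (\<Prod>j<n. if 1 \<le> s j then 1 / x else 1)" by (rule prod.inter_filter) simp
    finally show ?thesis .
  qed
  have "(real n / real m) ^ card {j. j < n \<and> s j \<ge> 1} * multinomial_moment m n s
      \<le> (\<Prod>j<n. if 1 \<le> s j then 1 / x else 1) * (\<Prod>j<n. G j)"
    unfolding card G_def x_def using moment_bound[OF n m, of s] x0
    by (intro mult_left_mono prod_nonneg) (auto simp: x_def)
  also have "\<dots> = (\<Prod>j<n. (if 1 \<le> s j then 1 / x else 1) * G j)" by (simp add: prod.distrib)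
  also have "\<dots> \<le> (\<Prod>j<n. (1 + y) ^ s j)"
    using Gb G0 x0 by (intro prod_mono) auto
  also have "\<dots> = (1 + y) ^ k" using sk power_sum[of "1 + y" s "{..<n}"] by simp
  also have "\<dots> \<le> (1 + y) ^ K" using y0 k unfolding K_def by (intro power_increasing) auto
  finally show "(real n / real m) ^ card {j. j < n \<and> s j \<ge> 1} * multinomial_moment m n s
                \<le> (1 + 1 * real m powr (1 + \<gamma>) / real n) ^ nat \<lfloor>\<gamma> * ln (real m)\<rfloor>"
    unfolding y K_def .
qed simp

end
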